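(* For $n=3$: $\mathbb{O}_{3,0}\simeq\mathbb{O}_{2,1}\simeq\mathbb{O}_{1,2}$, and $\mathbb{O}_{0,3}$ is not isomorphic to any of them by an isomorphism preserving the structure of $\mathbb{Z}_2^3$-graded algebra.
   Context: $\mathbb{Z}_2=\{0,1\}$. For $p+q=n\ge3$, $\mathbb{O}_{p,q}$ is the real algebra with basis $\{u_x: x\in\mathbb{Z}_2^n\}$ and product $u_x\cdot u_y=(-1)^{f(x,y)}u_{x+y}$, where $f(x,y)=\sum_{1\le i<j<k\le n}(x_ix_jy_k+x_iy_jx_k+y_ix_jx_k)+\sum_{1\le i\le j\le n}x_iy_j+\sum_{1\le i\le p}x_iy_i$. Homogeneous elements are scalar multiples of some $u_x$; an isomorphism preserving the graded structure is an algebra isomorphism sending homogeneous elements to homogeneous elements. *)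

theory Defs
  imports "HOL-Analysis.Analysis"
begin

text \<open>Elements of Z_2^n are boolean lists of length n (index i-1 stands for coordinate i);
  addition in Z_2 is exclusive or.\<close>

definition grades :: "nat \<Rightarrow> bool list set" where
  "grades n = {x. length x = n}"

definition gadd :: "bool list \<Rightarrow> bool list \<Rightarrow> bool list" where
  "gadd x y = map2 (\<noteq>) x y"

text \<open>The exponent f(x,y) (as a natural number; only its parity matters).\<close>

definition octf :: "nat \<Rightarrow> nat \<Rightarrow> bool list \<Rightarrow> bool list \<Rightarrow> nat" where
  "octf p n x y =
     (\<Sum>i<n. \<Sum>j<n. \<Sum>k<n. if i < j \<and> j < k then
        of_bool (x!i \<and> x!j \<and> y!k) + of_bool (x!i \<and> y!j \<and> x!k) + of_bool (y!i \<and> x!j \<and> x!k)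
      else 0)
   + (\<Sum>i<n. \<Sum>j<n. if i \<le> j then of_bool (x!i \<and> y!j) else 0)
   + (\<Sum>i<p. of_bool (x!i \<and> y!i))"

text \<open>The underlying vector space of O_{p,q}: real coefficient functions on Z_2^(p+q),
  zero outside Z_2^(p+q).\<close>

definition ocarrier :: "nat \<Rightarrow> nat \<Rightarrow> (bool list \<Rightarrow> real) set" where
  "ocarrier p q = {a. \<forall>z. z \<notin> grades (p+q) \<longrightarrow> a z = 0}"

definition ubasis :: "bool list \<Rightarrow> bool list \<Rightarrow> real" where
  "ubasis x = (\<lambda>z. if z = x then 1 else 0)"

text \<open>Bilinear extension of u_x u_y = (-1)^f(x,y) u_{x+y}.\<close>

definition omult :: "nat \<Rightarrow> nat \<Rightarrow> (bool list \<Rightarrow> real) \<Rightarrow> (bool list \<Rightarrow> real) \<Rightarrow> (bool list \<Rightarrow> real)" where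
  "omult p q a b = (\<lambda>z. \<Sum>x\<in>grades (p+q). \<Sum>y\<in>grades (p+q).
      if gadd x y = z then (-1) ^ octf p (p+q) x y * a x * b y else 0)"

definition homogeneous :: "nat \<Rightarrow> nat \<Rightarrow> (bool list \<Rightarrow> real) \<Rightarrow> bool" where
  "homogeneous p q a \<longleftrightarrow> (\<exists>x\<in>grades (p+q). \<exists>c::real. a = (\<lambda>z. c * ubasis x z))"

definition graded_iso_map :: "nat \<Rightarrow> nat \<Rightarrow> nat \<Rightarrow> nat \<Rightarrow>
    ((bool list \<Rightarrow> real) \<Rightarrow> (bool list \<Rightarrow> real)) \<Rightarrow> bool" where
  "graded_iso_map p q p' q' \<phi> \<longleftrightarrow>
     bij_betw \<phi> (ocarrier p q) (ocarrier p' q') \<and>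
     (\<forall>a\<in>ocarrier p q. \<forall>b\<in>ocarrier p q. \<phi> (\<lambda>z. a z + b z) = (\<lambda>z. \<phi> a z + \<phi> b z)) \<and>
     (\<forall>a\<in>ocarrier p q. \<forall>c::real. \<phi> (\<lambda>z. c * a z) = (\<lambda>z. c * \<phi> a z)) \<and>
     (\<forall>a\<in>ocarrier p q. \<forall>b\<in>ocarrier p q. \<phi> (omult p q a b) = omult p' q' (\<phi> a) (\<phi> b)) \<and>
     (\<forall>a\<in>ocarrier p q. homogeneous p q a \<longrightarrow> homogeneous p' q' (\<phi> a))"

definition graded_isomorphic :: "nat \<Rightarrow> nat \<Rightarrow> nat \<Rightarrow> nat \<Rightarrow> bool" where
  "graded_isomorphic p q p' q' \<longleftrightarrow> (\<exists>\<phi>. graded_iso_map p q p' q' \<phi>)"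

end

theory Submission
  imports Defs
begin


lemma len3: "length x = 3 \<longleftrightarrow> (\<exists>a b c. x = [a,b,c])"
  by (auto simp: numeral_3_eq_3 length_Suc_conv)

lemma grades3: "grades 3 = {[False,False,False],[False,False,True],[False,True,False],[False,True,True],
  [True,False,False],[True,False,True],[True,True,False],[True,True,True]}"
  unfolding grades_def len3 by auto

lemma octf3: "octf p 3 [a,b,c] [d,e,g] =
   of_bool (a\<and>b\<and>g) + of_bool (a\<and>e\<and>c) + of_bool (d\<and>b\<and>c)
  + (of_bool (a\<and>d) + of_bool (a\<and>e) + of_bool (a\<and>g) + of_bool (b\<and>e) + of_bool (b\<and>g) + of_bool (c\<and>g))
  + (\<Sum>i<p. of_bool ([a,b,c]!i \<and> [d,e,g]!i))"
  by (simp add: octf_def numeral_3_eq_3 lessThan_Suc)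


lemma octf3_0: "octf 0 3 [a,b,c] [d,e,g] =
   of_bool (a\<and>b\<and>g) + of_bool (a\<and>e\<and>c) + of_bool (d\<and>b\<and>c)
  + (of_bool (a\<and>d) + of_bool (a\<and>e) + of_bool (a\<and>g) + of_bool (b\<and>e) + of_bool (b\<and>g) + of_bool (c\<and>g))"
  unfolding octf3 by simp
lemma octf3_1: "octf 1 3 [a,b,c] [d,e,g] =
   of_bool (a\<and>b\<and>g) + of_bool (a\<and>e\<and>c) + of_bool (d\<and>b\<and>c)
  + (of_bool (a\<and>d) + of_bool (a\<and>e) + of_bool (a\<and>g) + of_bool (b\<and>e) + of_bool (b\<and>g) + of_bool (c\<and>g))
  + of_bool (a\<and>d)"
  unfolding octf3 by simp
lemma octf3_2: "octf 2 3 [a,b,c] [d,e,g] =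
   of_bool (a\<and>b\<and>g) + of_bool (a\<and>e\<and>c) + of_bool (d\<and>b\<and>c)
  + (of_bool (a\<and>d) + of_bool (a\<and>e) + of_bool (a\<and>g) + of_bool (b\<and>e) + of_bool (b\<and>g) + of_bool (c\<and>g))
  + (of_bool (a\<and>d) + of_bool (b\<and>e))"
  unfolding octf3 by (simp add: numeral_2_eq_2)
lemma octf3_3: "octf 3 3 [a,b,c] [d,e,g] =
   of_bool (a\<and>b\<and>g) + of_bool (a\<and>e\<and>c) + of_bool (d\<and>b\<and>c)
  + (of_bool (a\<and>d) + of_bool (a\<and>e) + of_bool (a\<and>g) + of_bool (b\<and>e) + of_bool (b\<and>g) + of_bool (c\<and>g))
  + (of_bool (a\<and>d) + of_bool (b\<and>e) + of_bool (c\<and>g))"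
  unfolding octf3 by (simp add: numeral_3_eq_3)

lemmas octf3_simps = octf3_0 octf3_1 octf3_2 octf3_3 octf3_1[unfolded One_nat_def]

lemma gadd_nth: "i < length x \<Longrightarrow> i < length y \<Longrightarrow> gadd x y ! i = (x!i \<noteq> y!i)"
  by (simp add: gadd_def)

lemma gadd_len: "length (gadd x y) = min (length x) (length y)"
  by (simp add: gadd_def)

lemma gadd_G: "x \<in> grades n \<Longrightarrow> y \<in> grades n \<Longrightarrow> gadd x y \<in> grades n"
  by (simp add: grades_def gadd_len)

lemma gadd_cancel: "length x = length w \<Longrightarrow> gadd x (gadd x w) = w"
  by (rule nth_equalityI) (auto simp: gadd_len gadd_nth)

lemma gadd_eq: "x \<in> grades n \<Longrightarrow> y \<in> grades n \<Longrightarrow> w \<in> grades n \<Longrightarrow> (gadd x y = w) \<longleftrightarrow> (y = gadd x w)"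
  unfolding grades_def using gadd_cancel[of x y] gadd_cancel[of x w] by auto

lemma finite_grades: "finite (grades n)"
proof -
  have "grades n = {xs. set xs \<subseteq> (UNIV::bool set) \<and> length xs = n}" by (simp add: grades_def)
  then show ?thesis using finite_lists_length_eq[of "UNIV::bool set" n] by simp
qed

lemma omult_alt: "omult p q a b w = (if w \<in> grades (p+q) then
   (\<Sum>x\<in>grades (p+q). (-1) ^ octf p (p+q) x (gadd x w) * a x * b (gadd x w)) else 0)"
proof (cases "w \<in> grades (p+q)")
  case True
  have "omult p q a b w = (\<Sum>x\<in>grades (p+q). (-1) ^ octf p (p+q) x (gadd x w) * a x * b (gadd x w))"
    unfolding omult_def
  proof (rule sum.cong[OF refl])
    fix x assume x: "x \<in> grades (p+q)"
    have "(\<Sum>y\<in>grades (p + q). if gadd x y = w then (- 1) ^ octf p (p + q) x y * a x * b y else 0)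
       = (\<Sum>y\<in>grades (p + q). if gadd x w = y then (- 1) ^ octf p (p + q) x y * a x * b y else 0)"
      by (rule sum.cong[OF refl]) (use gadd_eq[OF x _ True] in auto)
    also have "\<dots> = (- 1) ^ octf p (p + q) x (gadd x w) * a x * b (gadd x w)"
      using gadd_G[OF x True] by (subst sum.delta'[OF finite_grades]) simp
    finally show "(\<Sum>y\<in>grades (p + q). if gadd x y = w then (- 1) ^ octf p (p + q) x y * a x * b y else 0)
       = (- 1) ^ octf p (p + q) x (gadd x w) * a x * b (gadd x w)" .
  qed
  then show ?thesis using True by simp
next
  case False
  then show ?thesis unfolding omult_def
    by (auto intro!: sum.neutral dest: gadd_G)
qed

lemma omult_carrier: "omult p q a b \<in> ocarrier p q"
  unfolding ocarrier_def by (simp add: omult_alt)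

definition monmap :: "nat \<Rightarrow> (bool list \<Rightarrow> bool list) \<Rightarrow> (bool list \<Rightarrow> real) \<Rightarrow> (bool list \<Rightarrow> real) \<Rightarrow> (bool list \<Rightarrow> real)" where
  "monmap n \<tau> s a = (\<lambda>z. if z \<in> grades n then s z * a (\<tau> z) else 0)"

lemma monmap_iso:
  assumes n: "p+q = n" "p'+q' = n"
  and bij: "bij_betw \<tau> (grades n) (grades n)"
  and sgn: "\<And>z. z\<in>grades n \<Longrightarrow> s z * s z = 1"
  and add: "\<And>x y. x\<in>grades n \<Longrightarrow> y\<in>grades n \<Longrightarrow> \<tau> (gadd x y) = gadd (\<tau> x) (\<tau> y)"
  and sc: "\<And>x y. x\<in>grades n \<Longrightarrow> y\<in>grades n \<Longrightarrow>
     (-1)^octf p n (\<tau> x) (\<tau> y) * s (gadd x y) = (-1)^octf p' n x y * s x * s y"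
  shows "graded_iso_map p q p' q' (monmap n \<tau> s)"
proof -
  define G where "G = grades n"
  define \<rho> where "\<rho> = inv_into G \<tau>"
  have bij': "bij_betw \<tau> G G" using bij G_def by simp
  have rhoG: "\<rho> z \<in> G" if "z \<in> G" for z
    using bij' that unfolding \<rho>_def by (metis bij_betw_def inv_into_into)
  have tr: "\<tau> (\<rho> z) = z" if "z \<in> G" for z
    using bij' that unfolding \<rho>_def by (meson bij_betw_inv_into_right)
  have rt: "\<rho> (\<tau> z) = z" if "z \<in> G" for z
    using bij' that unfolding \<rho>_def by (meson bij_betw_inv_into_left)
  have tG: "\<tau> z \<in> G" if "z \<in> G" for z
    using bij' that by (meson bij_betwE)
  have oc: "ocarrier p q = {a. \<forall>z. z \<notin> G \<longrightarrow> a z = 0}" "ocarrier p' q' = {a. \<forall>z. z \<notin> G \<longrightarrow> a z = 0}"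
    using n by (auto simp: ocarrier_def G_def)
  have "bij_betw (monmap n \<tau> s) (ocarrier p q) (ocarrier p' q')"
  proof (rule bij_betw_byWitness[where f'="monmap n \<rho> (\<lambda>w. s (\<rho> w))"])
    show "\<forall>a\<in>ocarrier p q. monmap n \<rho> (\<lambda>w. s (\<rho> w)) (monmap n \<tau> s a) = a"
    proof
      fix a assume a: "a \<in> ocarrier p q"
      show "monmap n \<rho> (\<lambda>w. s (\<rho> w)) (monmap n \<tau> s a) = a"
      proof
        fix z show "monmap n \<rho> (\<lambda>w. s (\<rho> w)) (monmap n \<tau> s a) z = a z"
          using a rhoG tr sgn[of "\<rho> z"] unfolding monmap_def oc G_def[symmetric]
          by (auto simp: mult.assoc[symmetric])
      qed
    qed
    show "\<forall>a\<in>ocarrier p' q'. monmap n \<tau> s (monmap n \<rho> (\<lambda>w. s (\<rho> w))  a) = a"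
    proof
      fix a assume a: "a \<in> ocarrier p' q'"
      show "monmap n \<tau> s (monmap n \<rho> (\<lambda>w. s (\<rho> w)) a) = a"
      proof
        fix z show "monmap n \<tau> s (monmap n \<rho> (\<lambda>w. s (\<rho> w)) a) z = a z"
          using a tG rt sgn[of z] unfolding monmap_def oc G_def[symmetric]
          by (auto simp: mult.assoc[symmetric])
      qed
    qed
    show "monmap n \<tau> s ` ocarrier p q \<subseteq> ocarrier p' q'"
      unfolding oc monmap_def G_def by auto
    show "monmap n \<rho> (\<lambda>w. s (\<rho> w)) ` ocarrier p' q' \<subseteq> ocarrier p q"
      unfolding oc monmap_def G_def by auto
  qed
  moreover have "\<forall>a\<in>ocarrier p q. \<forall>b\<in>ocarrier p q. monmap n \<tau> s (\<lambda>z. a z + b z) = (\<lambda>z. monmap n \<tau> s a z + monmap n \<tau> s b z)"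
    by (auto simp: monmap_def distrib_left)
  moreover have "\<forall>a\<in>ocarrier p q. \<forall>c::real. monmap n \<tau> s (\<lambda>z. c * a z) = (\<lambda>z. c * monmap n \<tau> s a z)"
    by (auto simp: monmap_def)
  moreover have "\<forall>a\<in>ocarrier p q. \<forall>b\<in>ocarrier p q. monmap n \<tau> s (omult p q a b) = omult p' q' (monmap n \<tau> s a) (monmap n \<tau> s b)"
  proof (intro ballI ext)
    fix a b w
    show "monmap n \<tau> s (omult p q a b) w = omult p' q' (monmap n \<tau> s a) (monmap n \<tau> s b) w"
    proof (cases "w \<in> G")
      case False
      then show ?thesis unfolding monmap_def omult_alt n G_def by simp
    next
      case True
      have "monmap n \<tau> s (omult p q a b) w = s w * (\<Sum>x\<in>G. (-1) ^ octf p n x (gadd x (\<tau> w)) * a x * b (gadd x (\<tau> w)))"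
        using True tG[OF True] unfolding monmap_def omult_alt n G_def by simp
      also have "\<dots> = s w * (\<Sum>x\<in>G. (-1) ^ octf p n (\<tau> x) (gadd (\<tau> x) (\<tau> w)) * a (\<tau> x) * b (gadd (\<tau> x) (\<tau> w)))"
        by (subst sum.reindex_bij_betw[OF bij', symmetric]) simp
      also have "\<dots> = (\<Sum>x\<in>G. ((-1) ^ octf p n (\<tau> x) (\<tau> (gadd x w)) * s (gadd x (gadd x w))) * a (\<tau> x) * b (\<tau> (gadd x w)))"
        unfolding sum_distrib_left
        by (rule sum.cong[OF refl]) (use True add gadd_cancel in \<open>auto simp: G_def grades_def\<close>)
      also have "\<dots> = (\<Sum>x\<in>G. ((-1)^octf p' n x (gadd x w) * s x * s (gadd x w)) * a (\<tau> x) * b (\<tau> (gadd x w)))"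
        by (rule sum.cong[OF refl]) (use True sc gadd_G in \<open>auto simp: G_def\<close>)
      also have "\<dots> = omult p' q' (monmap n \<tau> s a) (monmap n \<tau> s b) w"
        unfolding omult_alt n monmap_def G_def[symmetric] using True
        by (auto intro!: sum.cong simp: G_def gadd_G)
      finally show ?thesis .
    qed
  qed
  moreover have "\<forall>a\<in>ocarrier p q. homogeneous p q a \<longrightarrow> homogeneous p' q' (monmap n \<tau> s a)"
  proof (intro ballI impI)
    fix a assume "homogeneous p q a"
    then obtain x c where x: "x \<in> G" and a: "a = (\<lambda>z. c * ubasis x z)"
      unfolding homogeneous_def n G_def by auto
    have "monmap n \<tau> s a = (\<lambda>z. (s (\<rho> x) * c) * ubasis (\<rho> x) z)"
    proof
      fix z show "monmap n \<tau> s a z = (s (\<rho> x) * c) * ubasis (\<rho> x) z"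
        unfolding a monmap_def ubasis_def G_def[symmetric]
        using x rhoG[OF x] tr[OF x] rt by auto
    qed
    then show "homogeneous p' q' (monmap n \<tau> s a)"
      unfolding homogeneous_def n G_def[symmetric] using rhoG[OF x] by blast
  qed
  ultimately show ?thesis unfolding graded_iso_map_def by blast
qed

definition tau1 :: "bool list \<Rightarrow> bool list" where "tau1 x = [x!2, x!1, x!0 \<noteq> x!2]"
definition s1 :: "bool list \<Rightarrow> real" where "s1 x = (if x = [True,False,True] \<or> x = [True,True,False] then -1 else 1)"
definition tau2 :: "bool list \<Rightarrow> bool list" where "tau2 x = [x!2, x!0 \<noteq> x!2, x!1]"
definition s2 :: "bool list \<Rightarrow> real" where "s2 x = (if x = [False,True,True] \<or> x = [True,False,True] then -1 else 1)"


lemma core: assumes a: "a \<in> ocarrier 0 3" and h: "omult 0 3 a a = ubasis [False,False,False]"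
  shows "a = ubasis [False,False,False] \<or> a = (\<lambda>z. -1 * ubasis [False,False,False] z)"
proof -
  have "\<forall>w\<in>grades 3. omult 0 3 a a w = ubasis [False,False,False] w" using h by simp
  then have E: "\<forall>w\<in>grades 3. (\<Sum>x\<in>grades 3. (-1) ^ octf 0 3 x (gadd x w) * a x * a (gadd x w)) = ubasis [False,False,False] w"
    by (simp add: omult_alt)
  have H1: "a [False, False, False] * a [False, False, False] - (a [False, False, True] * a [False, False, True] + a [False, True, False] * a [False, True, False] + a [False, True, True] * a [False, True, True] + a [True, False, False] * a [True, False, False] + a [True, False, True] * a [True, False, True] + a [True, True, False] * a [True, True, False] + a [True, True, True] * a [True, True, True]) = 1" and H2: "(a [False, False, False] = 0 \<or> a [False, False, True] = 0) \<and> (a [False, False, False] = 0 \<or> a [False, True, False] = 0) \<and> (a [False, False, False] = 0 \<or> a [False, True, True] = 0) \<and> (a [False, False, False] = 0 \<or> a [True, False, False] = 0) \<and> (a [False, False, False] = 0 \<or> a [True, False, True] = 0) \<and> (a [False, False, False] = 0 \<or> a [True, True, False] = 0) \<and> (a [False, False, False] = 0 \<or> a [True, True, True] = 0)"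
    using E unfolding grades3 by (simp_all add: gadd_def octf3_simps ubasis_def algebra_simps)
  have nz: "a [False, False, False] \<noteq> 0"
  proof
    assume "a [False, False, False] = 0"
    then show False using H1 zero_le_square[of "a [False, False, True]"] zero_le_square[of "a [False, True, False]"] zero_le_square[of "a [False, True, True]"] zero_le_square[of "a [True, False, False]"] zero_le_square[of "a [True, False, True]"] zero_le_square[of "a [True, True, False]"] zero_le_square[of "a [True, True, True]"] by simp
  qed
  then have Z: "a [False, False, True] = 0 \<and> a [False, True, False] = 0 \<and> a [False, True, True] = 0 \<and> a [True, False, False] = 0 \<and> a [True, False, True] = 0 \<and> a [True, True, False] = 0 \<and> a [True, True, True] = 0" using H2 by simp
  then have "a [False, False, False] * a [False, False, False] = 1" using H1 by simp
  then have pm: "a [False, False, False] = 1 \<or> a [False, False, False] = -1" by (simp add: square_eq_1_iff)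
  have out: "a z = 0" if "z \<notin> grades 3" for z using a that by (simp add: ocarrier_def)
  show ?thesis
  proof (cases "a [False, False, False] = 1")
    case True
    have "a = ubasis [False,False,False]"
    proof
      fix z show "a z = ubasis [False,False,False] z"
        using out[of z] True Z by (cases "z \<in> grades 3") (auto simp: grades3 ubasis_def)
    qed
    then show ?thesis by simp
  next
    case False
    then have F: "a [False, False, False] = -1" using pm by simp
    have "a = (\<lambda>z. -1 * ubasis [False,False,False] z)"
    proof
      fix z show "a z = -1 * ubasis [False,False,False] z"
        using out[of z] F Z by (cases "z \<in> grades 3") (auto simp: grades3 ubasis_def)
    qed
    then show ?thesis by simp
  qed
qed

lemma iso1: "graded_iso_map 3 0 2 1 (monmap 3 tau1 s1)"
proof (rule monmap_iso)
  show "bij_betw tau1 (grades 3) (grades 3)"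
    by (rule bij_betw_byWitness[where f'="\<lambda>x. [x!2 \<noteq> x!0, x!1, x!0]"]) (simp_all add: grades3 tau1_def)
  show "\<And>z. z\<in>grades 3 \<Longrightarrow> s1 z * s1 z = 1" by (auto simp: s1_def)
  have "\<forall>x\<in>grades 3. \<forall>y\<in>grades 3. tau1 (gadd x y) = gadd (tau1 x) (tau1 y)"
    unfolding grades3 by (simp add: tau1_def gadd_def)
  then show "\<And>x y. x\<in>grades 3 \<Longrightarrow> y\<in>grades 3 \<Longrightarrow> tau1 (gadd x y) = gadd (tau1 x) (tau1 y)" by blast
  have "\<forall>x\<in>grades 3. \<forall>y\<in>grades 3.
     (-1)^octf 3 3 (tau1 x) (tau1 y) * s1 (gadd x y) = ((-1)^octf 2 3 x y * s1 x * s1 y :: real)"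
    unfolding grades3 by (simp add: tau1_def gadd_def s1_def octf3_simps)
  then show "\<And>x y. x\<in>grades 3 \<Longrightarrow> y\<in>grades 3 \<Longrightarrow>
     (-1)^octf 3 3 (tau1 x) (tau1 y) * s1 (gadd x y) = (-1)^octf 2 3 x y * s1 x * s1 y" by blast
qed simp_all

lemma iso2: "graded_iso_map 2 1 1 2 (monmap 3 tau2 s2)"
proof (rule monmap_iso)
  show "bij_betw tau2 (grades 3) (grades 3)"
    by (rule bij_betw_byWitness[where f'="\<lambda>x. [x!1 \<noteq> x!0, x!2, x!0]"]) (simp_all add: grades3 tau2_def)
  show "\<And>z. z\<in>grades 3 \<Longrightarrow> s2 z * s2 z = 1" by (auto simp: s2_def)
  have "\<forall>x\<in>grades 3. \<forall>y\<in>grades 3. tau2 (gadd x y) = gadd (tau2 x) (tau2 y)"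
    unfolding grades3 by (simp add: tau2_def gadd_def)
  then show "\<And>x y. x\<in>grades 3 \<Longrightarrow> y\<in>grades 3 \<Longrightarrow> tau2 (gadd x y) = gadd (tau2 x) (tau2 y)" by blast
  have "\<forall>x\<in>grades 3. \<forall>y\<in>grades 3.
     (-1)^octf 2 3 (tau2 x) (tau2 y) * s2 (gadd x y) = ((-1)^octf 1 3 x y * s2 x * s2 y :: real)"
    unfolding grades3 by (simp add: tau2_def gadd_def s2_def octf3_simps)
  then show "\<And>x y. x\<in>grades 3 \<Longrightarrow> y\<in>grades 3 \<Longrightarrow>
     (-1)^octf 2 3 (tau2 x) (tau2 y) * s2 (gadd x y) = (-1)^octf 1 3 x y * s2 x * s2 y" by blast
qed simp_all


abbreviation "e0 \<equiv> ubasis [False,False,False]"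

lemma e_in: "x \<in> grades (p+q) \<Longrightarrow> ubasis x \<in> ocarrier p q"
  by (auto simp: ocarrier_def ubasis_def)

lemma g3cases: "w \<in> grades 3 \<Longrightarrow> w = [False,False,False] \<or> w = [False,False,True] \<or> w = [False,True,False] \<or> w = [False,True,True] \<or>
  w = [True,False,False] \<or> w = [True,False,True] \<or> w = [True,True,False] \<or> w = [True,True,True]"
  by (simp add: grades3)

lemma lid03: "a \<in> ocarrier 0 3 \<Longrightarrow> omult 0 3 e0 a = a"
proof
  fix w assume a: "a \<in> ocarrier 0 3"
  show "omult 0 3 e0 a w = a w"
  proof (cases "w \<in> grades 3")
    case True
    then show ?thesis
      by (simp add: omult_alt) (use g3cases[OF True] in \<open>elim disjE; simp add: grades3 ubasis_def gadd_def octf3_simps\<close>)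
  next
    case False then show ?thesis using a by (simp add: omult_alt ocarrier_def del: One_nat_def)
  qed
qed

lemma rid_3: "a \<in> ocarrier 3 0 \<Longrightarrow> omult 3 0 a e0 = a"
proof
  fix w assume a: "a \<in> ocarrier 3 0"
  have n: "(3::nat) + 0 = 3" by simp
  note oa = omult_alt[of 3 0 a e0 w, unfolded n]
  show "omult 3 0 a e0 w = a w"
  proof (cases "w \<in> grades 3")
    case True
    then show ?thesis
      by (simp only: oa if_True) (use g3cases[OF True] in \<open>elim disjE; simp add: grades3 ubasis_def gadd_def octf3_simps\<close>)
   
  next
    case False then show ?thesis using a by (simp add: omult_alt ocarrier_def del: One_nat_def)
  qed
qed

lemma rid_2: "a \<in> ocarrier 2 1 \<Longrightarrow> omult 2 1 a e0 = a"
proof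
  fix w assume a: "a \<in> ocarrier 2 1"
  have n: "(2::nat) + 1 = 3" by simp
  note oa = omult_alt[of 2 1 a e0 w, unfolded n]
  show "omult 2 1 a e0 w = a w"
  proof (cases "w \<in> grades 3")
    case True
    then show ?thesis
      by (simp only: oa if_True) (use g3cases[OF True] in \<open>elim disjE; simp add: grades3 ubasis_def gadd_def octf3_simps\<close>)
   
  next
    case False then show ?thesis using a by (simp add: omult_alt ocarrier_def del: One_nat_def)
  qed
qed

lemma rid_1: "a \<in> ocarrier 1 2 \<Longrightarrow> omult 1 2 a e0 = a"
proof
  fix w assume a: "a \<in> ocarrier 1 2"
  have n: "(1::nat) + 2 = 3" by simp
  note oa = omult_alt[of 1 2 a e0 w, unfolded n]
  show "omult 1 2 a e0 w = a w"
  proof (cases "w \<in> grades 3")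
    case True
    then show ?thesis
      by (simp only: oa if_True) (use g3cases[OF True] in \<open>elim disjE; simp add: grades3 ubasis_def gadd_def octf3_simps\<close>)
   
  next
    case False then show ?thesis using a by (simp add: omult_alt ocarrier_def del: One_nat_def)
  qed
qed

lemma noniso:
  assumes pq: "p'+q' = 3" and y: "y \<in> grades 3" "y \<noteq> [False,False,False]"
  and sq: "omult p' q' (ubasis y) (ubasis y) = e0"
  and rid: "\<And>b. b\<in>ocarrier p' q' \<Longrightarrow> omult p' q' b e0 = b"
  shows "\<not> graded_isomorphic 0 3 p' q'"
proof
  assume "graded_isomorphic 0 3 p' q'"
  then obtain \<phi> where iso: "graded_iso_map 0 3 p' q' \<phi>" unfolding graded_isomorphic_def by blast
  note d = iso[unfolded graded_iso_map_def]
  have bij: "bij_betw \<phi> (ocarrier 0 3) (ocarrier p' q')" using d by blast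
  have mul: "\<And>a b. a\<in>ocarrier 0 3 \<Longrightarrow> b\<in>ocarrier 0 3 \<Longrightarrow> \<phi> (omult 0 3 a b) = omult p' q' (\<phi> a) (\<phi> b)"
    using d by blast
  have scal: "\<And>a c. a\<in>ocarrier 0 3 \<Longrightarrow> \<phi> (\<lambda>z. c * a z) = (\<lambda>z. c * \<phi> a z)" using d by blast
  have G: "[False,False,False] \<in> grades 3" by (simp add: grades3)
  have e03: "e0 \<in> ocarrier 0 3" using e_in[of _ 0 3] G by simp
  have e': "e0 \<in> ocarrier p' q'" using e_in[of _ p' q'] G pq by simp
  have ey: "ubasis y \<in> ocarrier p' q'" using e_in[of _ p' q'] y pq by simp
  obtain a where a: "a \<in> ocarrier 0 3" "\<phi> a = e0"
    using bij e' by (metis bij_betw_iff_bijections)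
  have pe: "\<phi> e0 \<in> ocarrier p' q'" using bij e03 by (rule bij_betw_apply)
  have phie: "\<phi> e0 = e0"
  proof -
    have "\<phi> e0 = omult p' q' (\<phi> e0) e0" using rid[OF pe] by simp
    also have "\<dots> = \<phi> (omult 0 3 e0 a)" using mul[OF e03 a(1)] a(2) by simp
    also have "\<dots> = e0" using lid03[OF a(1)] a(2) by simp
    finally show ?thesis .
  qed
  obtain b where b: "b \<in> ocarrier 0 3" "\<phi> b = ubasis y"
    using bij ey by (metis bij_betw_iff_bijections)
  have "\<phi> (omult 0 3 b b) = \<phi> e0" using mul[OF b(1) b(1)] b(2) sq phie by simp
  then have "omult 0 3 b b = e0"
    using bij omult_carrier[of 0 3 b b] e03 unfolding bij_betw_def inj_on_def by blast
  then have "b = e0 \<or> b = (\<lambda>z. -1 * e0 z)" using core[OF b(1)] by simp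
  then have "ubasis y = e0 \<or> ubasis y = (\<lambda>z. -1 * e0 z)"
    using b(2) phie scal[OF e03, of "-1"] by auto
  then have "ubasis y y = e0 y \<or> ubasis y y = -1 * e0 y" by (metis)
  then show False using y(2) by (auto simp: ubasis_def)
qed



lemma sq_3: "omult 3 0 (ubasis [False,False,True]) (ubasis [False,False,True]) = e0"
proof
  fix w
  have n: "(3::nat) + 0 = 3" by simp
  note oa = omult_alt[of 3 0 "ubasis [False,False,True]" "ubasis [False,False,True]" w, unfolded n]
  show "omult 3 0 (ubasis [False,False,True]) (ubasis [False,False,True]) w = e0 w"
  proof (cases "w \<in> grades 3")
    case True
    then show ?thesis
      by (simp only: oa if_True) (use g3cases[OF True] in \<open>elim disjE; simp add: grades3 ubasis_def gadd_def octf3_simps\<close>)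
  next
    case False then show ?thesis by (simp only: oa if_False) (simp add: ubasis_def grades3)
  qed
qed

lemma sq_2: "omult 2 1 (ubasis [False,True,False]) (ubasis [False,True,False]) = e0"
proof
  fix w
  have n: "(2::nat) + 1 = 3" by simp
  note oa = omult_alt[of 2 1 "ubasis [False,True,False]" "ubasis [False,True,False]" w, unfolded n]
  show "omult 2 1 (ubasis [False,True,False]) (ubasis [False,True,False]) w = e0 w"
  proof (cases "w \<in> grades 3")
    case True
    then show ?thesis
      by (simp only: oa if_True) (use g3cases[OF True] in \<open>elim disjE; simp add: grades3 ubasis_def gadd_def octf3_simps\<close>)
  next
    case False then show ?thesis by (simp only: oa if_False) (simp add: ubasis_def grades3)
  qed
qed

lemma sq_1: "omult 1 2 (ubasis [True,False,False]) (ubasis [True,False,False]) = e0"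
proof
  fix w
  have n: "(1::nat) + 2 = 3" by simp
  note oa = omult_alt[of 1 2 "ubasis [True,False,False]" "ubasis [True,False,False]" w, unfolded n]
  show "omult 1 2 (ubasis [True,False,False]) (ubasis [True,False,False]) w = e0 w"
  proof (cases "w \<in> grades 3")
    case True
    then show ?thesis
      by (simp only: oa if_True) (use g3cases[OF True] in \<open>elim disjE; simp add: grades3 ubasis_def gadd_def octf3_simps\<close>)
  next
    case False then show ?thesis by (simp only: oa if_False) (simp add: ubasis_def grades3)
  qed
qed

theorem mainTheorem4:
  shows "graded_isomorphic 3 0 2 1 \<and> graded_isomorphic 2 1 1 2 \<and>
         \<not> graded_isomorphic 0 3 3 0 \<and> \<not> graded_isomorphic 0 3 2 1 \<and>
         \<not> graded_isomorphic 0 3 1 2"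
proof (intro conjI)
  show "graded_isomorphic 3 0 2 1" using iso1 unfolding graded_isomorphic_def by blast
  show "graded_isomorphic 2 1 1 2" using iso2 unfolding graded_isomorphic_def by blast
  show "\<not> graded_isomorphic 0 3 3 0"
    by (rule noniso[OF _ _ _ sq_3 rid_3]) (simp_all add: grades3)
  show "\<not> graded_isomorphic 0 3 2 1"
    by (rule noniso[OF _ _ _ sq_2 rid_2]) (simp_all add: grades3)
  show "\<not> graded_isomorphic 0 3 1 2"
    by (rule noniso[OF _ _ _ sq_1 rid_1]) (simp_all add: grades3)
qed

end
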